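(* Let $R$ be a $*$-ring. The following are equivalent: (1) ${\rm psr}(R)=1$ and $R$ is $*$-abelian. (2) For any $a,b\in R$ with $aR+bR=R$ there exists a projection $p$ with $pa=ap$ such that $a+bp\in U(R)$. (3) ${\rm isr}(R)=1$ and every idempotent of $R$ is a projection. (4) $R$ is clean and every idempotent of $R$ is a projection; equivalently, $R$ is exchange and every idempotent of $R$ is a projection. (5) $R$ is $*$-clean and $*$-abelian. (6) $R$ is strongly $*$-clean. (7) For every $a\in R$ there exists a projection $p\in aR$ such that $1-p\in(1-a)R$.
   Context: Rings are associative with identity. A $*$-ring is a ring with an involution $*$ ($(x+y)^*=x^*+y^*$, $(xy)^*=y^*x^*$, $(x^* )^*=x$). A projection is $p$ with $p^2=p=p^*$; $U(R)$ is the unit group. $R$ is clean if each element is a sum of an idempotent and a unit; $*$-clean if each element is a sum of a projection and a unit; strongly $*$-clean if each element is a sum of a projection and a unit that commute. $R$ is exchange if for every $a\in R$ there is an idempotent $e\in aR$ with $1-e\in(1-a)R$. $R$ is $*$-abelian if every projection is central. ${\rm isr}(R)=1$ means: whenever $aR+bR=R$, there is an idempotent $e$ with $a+be\in U(R)$. ${\rm psr}(R)=1$ means: whenever $aR+bR=R$, there is a projection $p$ with $a+bp\in U(R)$. *)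

theory Defs
  imports Main
begin

definition star_ring :: "('a::ring_1 \<Rightarrow> 'a) \<Rightarrow> bool" where
  "star_ring s \<longleftrightarrow> (\<forall>x y. s (x + y) = s x + s y) \<and> (\<forall>x y. s (x * y) = s y * s x)
     \<and> (\<forall>x. s (s x) = x)"

definition idempotent :: "'a::ring_1 \<Rightarrow> bool" where
  "idempotent e \<longleftrightarrow> e * e = e"

definition projection :: "('a::ring_1 \<Rightarrow> 'a) \<Rightarrow> 'a \<Rightarrow> bool" where
  "projection s p \<longleftrightarrow> p * p = p \<and> s p = p"

definition unit_ring :: "'a::ring_1 \<Rightarrow> bool" where
  "unit_ring u \<longleftrightarrow> (\<exists>v. u * v = 1 \<and> v * u = 1)"

definition rideal :: "'a::ring_1 \<Rightarrow> 'a set" where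
  "rideal a = {a * x | x. True}"

definition comaximal :: "'a::ring_1 \<Rightarrow> 'a \<Rightarrow> bool" where
  "comaximal a b \<longleftrightarrow> {a * x + b * y | x y. True} = UNIV"

definition clean :: "'a::ring_1 itself \<Rightarrow> bool" where
  "clean _ \<longleftrightarrow> (\<forall>a::'a. \<exists>e u. idempotent e \<and> unit_ring u \<and> a = e + u)"

definition star_clean :: "('a::ring_1 \<Rightarrow> 'a) \<Rightarrow> bool" where
  "star_clean s \<longleftrightarrow> (\<forall>a. \<exists>p u. projection s p \<and> unit_ring u \<and> a = p + u)"

definition strongly_star_clean :: "('a::ring_1 \<Rightarrow> 'a) \<Rightarrow> bool" where
  "strongly_star_clean s \<longleftrightarrow>
     (\<forall>a. \<exists>p u. projection s p \<and> unit_ring u \<and> a = p + u \<and> p * u = u * p)"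

definition exchange :: "'a::ring_1 itself \<Rightarrow> bool" where
  "exchange _ \<longleftrightarrow> (\<forall>a::'a. \<exists>e. idempotent e \<and> e \<in> rideal a \<and> 1 - e \<in> rideal (1 - a))"

definition star_abelian :: "('a::ring_1 \<Rightarrow> 'a) \<Rightarrow> bool" where
  "star_abelian s \<longleftrightarrow> (\<forall>p. projection s p \<longrightarrow> (\<forall>x. p * x = x * p))"

definition isr_one :: "'a::ring_1 itself \<Rightarrow> bool" where
  "isr_one _ \<longleftrightarrow> (\<forall>a b::'a. comaximal a b \<longrightarrow> (\<exists>e. idempotent e \<and> unit_ring (a + b * e)))"

definition psr_one :: "('a::ring_1 \<Rightarrow> 'a) \<Rightarrow> bool" where
  "psr_one s \<longleftrightarrow> (\<forall>a b. comaximal a b \<longrightarrow> (\<exists>p. projection s p \<and> unit_ring (a + b * p)))"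

definition idems_are_projections :: "('a::ring_1 \<Rightarrow> 'a) \<Rightarrow> bool" where
  "idems_are_projections s \<longleftrightarrow> (\<forall>e. idempotent e \<longrightarrow> projection s e)"

end

theory Submission imports Defs begin

lemma star_basic:
  assumes "star_ring s"
  shows "s 1 = 1" "s 0 = 0" "s (-x) = - s x" "s (x - y) = s x - s y"
    "s (x*y) = s y * s x" "s (x+y) = s x + s y" "s (s x) = x"
proof -
  have add: "\<And>x y. s (x+y) = s x + s y" and mul: "\<And>x y. s (x*y) = s y * s x"
    and inv: "\<And>x. s (s x) = x" using assms unfolding star_ring_def by auto
  have "s 1 = s 1 * s (s 1)" using inv by simp
  also have "\<dots> = s (s 1 * 1)" by (rule mul[symmetric])
  also have "\<dots> = 1" using inv by simp
  finally show "s 1 = 1" .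
  have "s 0 = s 0 + s 0" using add[of 0 0] by simp
  hence s0: "s 0 = 0" by simp
  thus "s 0 = 0" .
  have n: "s (-x) = - s x" for x
  proof -
    have "s x + s (-x) = 0" using s0 add[of x "-x"] by simp
    from add.inverse_unique[OF this] show ?thesis by simp
  qed
  thus "s (-x) = - s x" .
  show "s (x - y) = s x - s y" using add[of x "-y"] n[of y] by simp
  show "s (x*y) = s y * s x" "s (x+y) = s x + s y" "s (s x) = x" using add mul inv by auto
qed

definition abel :: "'a::ring_1 itself \<Rightarrow> bool" where
  "abel _ \<longleftrightarrow> (\<forall>e::'a. idempotent e \<longrightarrow> (\<forall>x. e * x = x * e))"

lemma ip_corner:
  fixes s :: "'a::ring_1 \<Rightarrow> 'a" and e :: 'a
  assumes st: "star_ring s" and ip: "idems_are_projections s" and e: "idempotent e"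
  shows "e * x * (1 - e) = 0"
proof -
  have ee: "e * e = e" using e unfolding idempotent_def .
  let ?n = "e * x * (1 - e)"
  have n1: "e * ?n = ?n" using ee by (simp add: mult.assoc[symmetric])
  have n2: "?n * e = 0" using ee by (simp add: mult.assoc algebra_simps)
  have n3: "?n * ?n = 0" using n2 by (metis mult.assoc mult_zero_left mult_zero_right)
  have "(e + ?n) * (e + ?n) = e * e + e * ?n + ?n * e + ?n * ?n" by (simp add: algebra_simps)
  also have "\<dots> = e + ?n" using ee n1 n2 n3 by simp
  finally have "idempotent (e + ?n)" unfolding idempotent_def .
  hence "s (e + ?n) = e + ?n" using ip unfolding idems_are_projections_def projection_def by blast
  moreover have "s e = e" using ip e unfolding idems_are_projections_def projection_def by blast
  ultimately have sn: "s ?n = ?n" using star_basic[OF st] by simp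
  have "s ?n = (1 - e) * s x * e" using star_basic[OF st] \<open>s e = e\<close> by (simp add: mult.assoc)
  hence "?n = (1 - e) * s x * e" using sn by simp
  hence "e * ?n = e * ((1 - e) * s x * e)" by simp
  also have "\<dots> = (e * (1 - e)) * s x * e" by (simp add: mult.assoc)
  also have "e * (1 - e) = 0" using ee by (simp add: algebra_simps)
  also have "0 * s x * e = 0" by simp
  finally show ?thesis using n1 by simp
qed

lemma ip_abel:
  fixes s :: "'a::ring_1 \<Rightarrow> 'a"
  assumes st: "star_ring s" and ip: "idems_are_projections s"
  shows "abel TYPE('a)"
  unfolding abel_def
proof (intro allI impI)
  fix e x :: 'a assume e: "idempotent e"
  have ee: "e*e = e" using e unfolding idempotent_def .
  have e': "idempotent (1 - e)" using ee unfolding idempotent_def by (simp add: algebra_simps)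
  have 1: "e * x * (1 - e) = 0" by (rule ip_corner[OF st ip e])
  have 2: "(1 - e) * x * (1 - (1 - e)) = 0" by (rule ip_corner[OF st ip e'])
  have "e * x * (1 - e) = e * x - e * x * e" by (simp add: algebra_simps)
  with 1 have "e * x = e * x * e" by simp
  moreover have "(1 - e) * x * (1 - (1 - e)) = x * e - e * x * e" by (simp add: algebra_simps)
  with 2 have "x * e = e * x * e" by simp
  ultimately show "e * x = x * e" by simp
qed

lemma abel_df:
  assumes ab: "abel TYPE('a::ring_1)" and wz: "w * z = (1::'a)"
  shows "unit_ring w"
proof -
  have "z * w * (z * w) = z * (w * z) * w" by (simp add: mult.assoc)
  hence "idempotent (z * w)" unfolding idempotent_def using wz by simp
  hence "\<forall>x. (z * w) * x = x * (z * w)" using ab unfolding abel_def by blast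
  hence c: "w * (z * w) = (z * w) * w" by simp
  have "w = w * (z * w)" using wz by (simp add: mult.assoc[symmetric])
  hence w: "w = z * w * w" using c by simp
  have "z * w = z * w * (w * z)" using wz by simp
  also have "\<dots> = (z * w * w) * z" by (simp add: mult.assoc)
  also have "\<dots> = 1" using w wz by simp
  finally show ?thesis unfolding unit_ring_def using wz by blast
qed


lemma unitE:
  assumes "unit_ring u" obtains v where "u * v = 1" "v * u = 1"
  using assms unfolding unit_ring_def by blast

lemma ssc_ip:
  fixes s :: "'a::ring_1 \<Rightarrow> 'a"
  assumes st: "star_ring s" and ssc: "strongly_star_clean s"
  shows "idems_are_projections s"
  unfolding idems_are_projections_def
proof (intro allI impI)
  fix a :: 'a assume ai: "idempotent a"
  have aa: "a * a = a" using ai unfolding idempotent_def .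
  obtain p u where pr: "projection s p" and un: "unit_ring u" and apu: "a = p + u" and pu: "p * u = u * p"
    using ssc unfolding strongly_star_clean_def by blast
  obtain v where uv: "u * v = 1" "v * u = 1" using un by (rule unitE)
  have pp: "p * p = p" and sp: "s p = p" using pr unfolding projection_def by auto
  have ua: "u = a - p" using apu by simp
  have ap: "a * p = p * a" using apu pu by (simp add: algebra_simps pp)
  have "(1 - a - p) * u = 0" unfolding ua using aa pp ap by (simp add: algebra_simps)
  hence "(1 - a - p) * u * v = 0" by simp
  hence "1 - a - p = 0" using uv by (simp add: mult.assoc)
  hence a1: "a = 1 - p" by (simp add: algebra_simps)
  have "s a = a" unfolding a1 using star_basic[OF st] sp by simp
  thus "projection s a" using aa unfolding projection_def by simp
qed

lemma ssc_p7:
  fixes s :: "'a::ring_1 \<Rightarrow> 'a"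
  assumes st: "star_ring s" and ssc: "strongly_star_clean s"
  shows "\<exists>p. projection s p \<and> p \<in> rideal a \<and> 1 - p \<in> rideal (1 - a)"
proof -
  obtain p u where pr: "projection s p" and un: "unit_ring u" and apu: "a = p + u" and pu: "p * u = u * p"
    using ssc unfolding strongly_star_clean_def by blast
  obtain v where uv: "u * v = 1" "v * u = 1" using un by (rule unitE)
  have pp: "p * p = p" and sp: "s p = p" using pr unfolding projection_def by auto
  have "a * ((1 - p) * v) = (p + u) * (1 - p) * v" using apu by (simp add: mult.assoc)
  also have "(p + u) * (1 - p) = (1 - p) * u" using pp pu by (simp add: algebra_simps)
  also have "(1 - p) * u * v = 1 - p" using uv by (simp add: mult.assoc)
  finally have e1: "a * ((1 - p) * v) = 1 - p" .
  have 1: "1 - p \<in> rideal a" unfolding rideal_def using e1[symmetric] by blast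
  have "(1 - a) * (- (p * v)) = - ((1 - (p + u)) * p * v)" using apu by (simp add: mult.assoc)
  also have "(1 - (p + u)) * p = - (p * u)" using pp pu by (simp add: algebra_simps)
  also have "- (- (p * u) * v) = p" using uv by (simp add: mult.assoc)
  finally have e2: "(1 - a) * (- (p * v)) = p" .
  have 2: "1 - (1 - p) \<in> rideal (1 - a)" 
  proof -
    have "1 - (1 - p) = (1 - a) * (- (p * v))" using e2 by simp
    thus ?thesis unfolding rideal_def by blast
  qed
  have "s (1 - p) = 1 - p" using sp star_basic(1,4)[OF st] by simp
  moreover have "(1 - p) * (1 - p) = 1 - p" using pp by (simp add: algebra_simps)
  ultimately have "projection s (1 - p)" unfolding projection_def by simp
  with 1 2 show ?thesis by blast
qed

lemma p7_ip:
  fixes s :: "'a::ring_1 \<Rightarrow> 'a"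
  assumes p7: "\<forall>a. \<exists>p. projection s p \<and> p \<in> rideal a \<and> 1 - p \<in> rideal (1 - a)"
  shows "idems_are_projections s"
  unfolding idems_are_projections_def
proof (intro allI impI)
  fix e :: 'a assume ei: "idempotent e"
  have ee: "e * e = e" using ei unfolding idempotent_def .
  obtain p where pr: "projection s p" and "p \<in> rideal e" and "1 - p \<in> rideal (1 - e)" using p7 by blast
  then obtain r t where pr1: "p = e * r" and pt: "1 - p = (1 - e) * t" unfolding rideal_def by blast
  have "e * p = p" unfolding pr1 using ee by (simp add: mult.assoc[symmetric])
  moreover have "e * (1 - p) = (e * (1 - e)) * t" unfolding pt by (simp add: mult.assoc)
  moreover have "e * (1 - e) = 0" using ee by (simp add: algebra_simps)
  ultimately have "e * (1 - p) = 0" and "e * p = p" by simp_all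
  moreover have "e * (1 - p) = e - e * p" by (simp add: algebra_simps)
  ultimately have "e = p" by simp
  thus "projection s e" using pr by simp
qed

lemma abelD: "abel TYPE('a::ring_1) \<Longrightarrow> idempotent (e::'a) \<Longrightarrow> e * x = x * e"
  unfolding abel_def by blast

lemma exch_clean:
  assumes ab: "abel TYPE('a::ring_1)" and ex: "exchange TYPE('a)"
  shows "clean TYPE('a)"
  unfolding clean_def
proof
  fix a :: 'a
  obtain e where ei: "idempotent e" and "e \<in> rideal a" and "1 - e \<in> rideal (1 - a)"
    using ex unfolding exchange_def by blast
  then obtain r t where er: "e = a * r" and ht: "1 - e = (1 - a) * t" unfolding rideal_def by blast
  define h where "h = 1 - e"
  have ee: "e * e = e" using ei unfolding idempotent_def .
  have hi: "idempotent h" using ee unfolding idempotent_def h_def by (simp add: algebra_simps)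
  have hh: "h * h = h" using hi unfolding idempotent_def .
  have he: "h * e = 0" unfolding h_def using ee by (simp add: algebra_simps)
  have ce: "\<And>x. e * x = x * e" using abelD[OF ab ei] .
  have ch: "\<And>x. h * x = x * h" using abelD[OF ab hi] .
  have at: "a * t = t - h" using ht unfolding h_def[symmetric] by (simp add: algebra_simps)
  define w where "w = a - h"
  have 1: "w * (r * e) = e"
  proof -
    have "w * (r * e) = a * r * e - h * r * e" unfolding w_def by (simp add: algebra_simps)
    also have "h * r * e = r * (h * e)" using ch[of r] by (simp add: mult.assoc)
    finally show ?thesis using er ee he by simp
  qed
  have 2: "w * (t * h) = - h"
  proof -
    have "w * (t * h) = a * t * h - h * t * h" unfolding w_def by (simp add: algebra_simps)
    also have "h * t * h = t * h" using ch[of t] hh by (simp add: mult.assoc)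
    also have "a * t * h = (t - h) * h" using at by simp
    also have "\<dots> = t * h - h" using hh by (simp add: algebra_simps)
    finally show ?thesis by simp
  qed
  have "w * (r * e - t * h) = 1" using 1 2 unfolding h_def by (simp add: algebra_simps)
  hence "unit_ring w" by (rule abel_df[OF ab])
  moreover have "a = h + w" unfolding w_def by simp
  ultimately show "\<exists>e u. idempotent e \<and> unit_ring u \<and> a = e + u" using hi by blast
qed


lemma exch_isr:
  assumes ab: "abel TYPE('a::ring_1)" and ex: "exchange TYPE('a)"
  shows "isr_one TYPE('a)"
  unfolding isr_one_def
proof (intro allI impI)
  fix a b :: 'a assume cm: "comaximal a b"
  have cl: "clean TYPE('a)" by (rule exch_clean[OF ab ex])
  have "(1::'a) \<in> {a * x + b * y | x y. True}" using cm unfolding comaximal_def by simp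
  then obtain x y where xy0: "1 = a * x + b * y" by blast
  hence xy: "a * x + b * y = 1" by simp
  obtain f where fi: "idempotent f" and "f \<in> rideal (a * x)" and "1 - f \<in> rideal (1 - a * x)"
    using ex unfolding exchange_def by blast
  then obtain r t where fr: "f = a * x * r" and ht0: "1 - f = (1 - a * x) * t" unfolding rideal_def by blast
  define h where "h = 1 - f"
  have ff: "f * f = f" using fi unfolding idempotent_def .
  have hi: "idempotent h" using ff unfolding idempotent_def h_def by (simp add: algebra_simps)
  have hh: "h * h = h" using hi unfolding idempotent_def .
  have hf: "h * f = 0" unfolding h_def using ff by (simp add: algebra_simps)
  have fh: "f * h = 0" unfolding h_def using ff by (simp add: algebra_simps)
  have cf: "\<And>z. f * z = z * f" using abelD[OF ab fi] .
  have ch: "\<And>z. h * z = z * h" using abelD[OF ab hi] .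
  have "1 - a * x = b * y" using xy by (simp add: algebra_simps)
  hence ht: "h = b * y * t" using ht0 unfolding h_def by simp
  define \<beta> where "\<beta> = b * h + f"
  have "\<beta> * (y * t * h + f) = 1"
  proof -
    have "\<beta> * (y * t * h + f) = b * (h * (y * t * h)) + b * (h * f) + f * (y * t * h) + f * f"
      unfolding \<beta>_def by (simp add: algebra_simps)
    also have "h * (y * t * h) = y * t * h * h" by (rule ch)
    also have "b * (y * t * h * h) = h" using ht hh by (simp add: mult.assoc)
    also have "f * (y * t * h) = y * t * (h * f)" using cf[of "y * t * h"] by (simp add: mult.assoc)
    finally show ?thesis using hf ff unfolding h_def by simp
  qed
  hence "unit_ring \<beta>" by (rule abel_df[OF ab])
  then obtain \<beta>' where bb: "\<beta> * \<beta>' = 1" "\<beta>' * \<beta> = 1" by (rule unitE)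
  obtain g v where gi: "idempotent g" and vu: "unit_ring v" and gv: "- (\<beta>' * a) = g + v"
    using cl unfolding clean_def by blast
  obtain v' where vv: "v * v' = 1" "v' * v = 1" using vu by (rule unitE)
  have gg: "g * g = g" using gi unfolding idempotent_def .
  have cg: "\<And>z. g * z = z * g" using abelD[OF ab gi] .
  have "\<beta> * (- (\<beta>' * a)) = - a" using bb by (simp add: mult.assoc[symmetric])
  hence "- a = \<beta> * g + \<beta> * v" using gv by (simp add: algebra_simps)
  hence ag: "a + \<beta> * g = - (\<beta> * v)" by (metis add.commute add_diff_cancel_left' diff_minus_eq_add minus_add_distrib)
  define u where "u = - (\<beta> * v)"
  define u' where "u' = - (v' * \<beta>')"
  have uu: "u * u' = 1" unfolding u_def u'_def using vv bb
    by (simp add: mult.assoc) (simp add: mult.assoc[symmetric])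
  define e where "e = h * g"
  have ei: "idempotent e" unfolding idempotent_def e_def
  proof -
    have "h * g * (h * g) = h * (g * h) * g" by (simp add: mult.assoc)
    also have "g * h = h * g" by (rule cg)
    finally show "h * g * (h * g) = h * g" using hh gg by (simp add: mult.assoc)
      (simp add: mult.assoc[symmetric])
  qed
  define zz where "zz = a + b * e"
  have hgf: "h * g * f = 0"
  proof -
    have "h * g * f = h * (f * g)" using cg[of f] by (simp add: mult.assoc)
    also have "\<dots> = 0" using hf by (simp add: mult.assoc[symmetric])
    finally show ?thesis .
  qed
  have r1: "zz * (f * (x * r)) = f"
  proof -
    have "zz * (f * (x * r)) = a * (f * (x * r)) + b * (h * g * f) * (x * r)"
      unfolding zz_def e_def by (simp add: algebra_simps)
    moreover have "a * (f * (x * r)) = a * (x * r * f)" using cf[of "x * r"] by simp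
    moreover have "a * (x * r * f) = f * f" using fr by (simp add: mult.assoc)
    ultimately show ?thesis using hgf ff by simp
  qed
  have hgh: "h * g * h = h * g"
  proof -
    have "h * g * h = h * (h * g)" using cg[of h] by (simp add: mult.assoc)
    thus ?thesis using hh by (simp add: mult.assoc[symmetric])
  qed
  have fgh: "f * g * h = 0"
  proof -
    have "f * g * h = g * (f * h)" using cf[of g] by (simp add: mult.assoc)
    thus ?thesis using fh by simp
  qed
  have zh: "zz * h = u * h"
  proof -
    have "zz * h = a * h + b * (h * g * h)" unfolding zz_def e_def by (simp add: algebra_simps)
    also have "\<dots> = a * h + b * h * g" using hgh by (simp add: mult.assoc)
    also have "\<dots> = (a + \<beta> * g) * h" unfolding \<beta>_def
      using hgh fgh by (simp add: algebra_simps)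
    finally show ?thesis using ag unfolding u_def by simp
  qed
  have r2: "zz * (h * u') = h"
  proof -
    have "zz * (h * u') = u * h * u'" using zh by (simp add: mult.assoc[symmetric])
    also have "\<dots> = u * (u' * h)" using ch[of u'] by (simp add: mult.assoc)
    also have "\<dots> = h" using uu by (simp add: mult.assoc[symmetric])
    finally show ?thesis .
  qed
  have "zz * (f * (x * r) + h * u') = 1" using r1 r2 unfolding h_def by (simp add: algebra_simps)
  hence "unit_ring zz" by (rule abel_df[OF ab])
  thus "\<exists>e. idempotent e \<and> unit_ring (a + b * e)" using ei unfolding zz_def by blast
qed

theorem theorem4p5:
  fixes s :: "'a::ring_1 \<Rightarrow> 'a"
  assumes "star_ring s"
  shows "(psr_one s \<and> star_abelian s)
           = (\<forall>a b. comaximal a b \<longrightarrow>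
                (\<exists>p. projection s p \<and> p * a = a * p \<and> unit_ring (a + b * p)))
       \<and> (\<forall>a b. comaximal a b \<longrightarrow>
                (\<exists>p. projection s p \<and> p * a = a * p \<and> unit_ring (a + b * p)))
           = (isr_one TYPE('a) \<and> idems_are_projections s)
       \<and> (isr_one TYPE('a) \<and> idems_are_projections s)
           = (clean TYPE('a) \<and> idems_are_projections s)
       \<and> (clean TYPE('a) \<and> idems_are_projections s)
           = (exchange TYPE('a) \<and> idems_are_projections s)
       \<and> (exchange TYPE('a) \<and> idems_are_projections s)
           = (star_clean s \<and> star_abelian s)
       \<and> (star_clean s \<and> star_abelian s) = strongly_star_clean s
       \<and> strongly_star_clean s
           = (\<forall>a. \<exists>p. projection s p \<and> p \<in> rideal a \<and> 1 - p \<in> rideal (1 - a))"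
proof -
  note st = assms
  define P1 where "P1 = (psr_one s \<and> star_abelian s)"
  define P2 where "P2 = (\<forall>a b. comaximal a b \<longrightarrow>
                (\<exists>p. projection s p \<and> p * a = a * p \<and> unit_ring (a + b * p)))"
  define P3 where "P3 = (isr_one TYPE('a) \<and> idems_are_projections s)"
  define P4 where "P4 = (clean TYPE('a) \<and> idems_are_projections s)"
  define P4' where "P4' = (exchange TYPE('a) \<and> idems_are_projections s)"
  define P5 where "P5 = (star_clean s \<and> star_abelian s)"
  define P6 where "P6 = strongly_star_clean s"
  define P7 where "P7 = (\<forall>a. \<exists>p. projection s p \<and> p \<in> rideal a \<and> 1 - p \<in> rideal (1 - a))"
  have proj_idem: "\<And>p. projection s p \<Longrightarrow> idempotent p"
    unfolding projection_def idempotent_def by simp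
  have ipsa: "idems_are_projections s \<Longrightarrow> star_abelian s"
    unfolding star_abelian_def using ip_abel[OF st] abelD proj_idem by blast
  have cm1: "\<And>a::'a. comaximal (a - 1) 1"
    unfolding comaximal_def by (auto intro: exI[of _ 0])
  have p1: "projection s p \<Longrightarrow> projection s (1 - p)" for p
  proof -
    assume pr: "projection s p"
    have pp: "p * p = p" and sp: "s p = p" using pr unfolding projection_def by auto
    have "s (1 - p) = 1 - p" using sp star_basic(1,4)[OF st] by simp
    moreover have "(1 - p) * (1 - p) = 1 - p" using pp by (simp add: algebra_simps)
    ultimately show "projection s (1 - p)" unfolding projection_def by simp
  qed
  have "P6 \<Longrightarrow> P7" unfolding P6_def P7_def using ssc_p7[OF st] by blast
  moreover have "P7 \<Longrightarrow> P4'"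
  proof -
    assume h: P7
    have "idems_are_projections s" using p7_ip h unfolding P7_def by blast
    moreover have "exchange TYPE('a)" unfolding exchange_def using h proj_idem unfolding P7_def by blast
    ultimately show P4' unfolding P4'_def by simp
  qed
  moreover have "P4' \<Longrightarrow> P7"
  proof -
    assume h: P4'
    hence ip: "idems_are_projections s" unfolding P4'_def by simp
    show P7 unfolding P7_def
    proof
      fix a :: 'a
      obtain e where "idempotent e" "e \<in> rideal a" "1 - e \<in> rideal (1 - a)"
        using h unfolding P4'_def exchange_def by blast
      thus "\<exists>p. projection s p \<and> p \<in> rideal a \<and> 1 - p \<in> rideal (1 - a)"
        using ip unfolding idems_are_projections_def by blast
    qed
  qed
  moreover have "P4' \<Longrightarrow> P4" unfolding P4'_def P4_def using exch_clean ip_abel[OF st] by blast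
  moreover have "P4' \<Longrightarrow> P3" unfolding P4'_def P3_def using exch_isr ip_abel[OF st] by blast
  moreover have "P4 \<Longrightarrow> P6"
  proof -
    assume h: P4
    hence ip: "idems_are_projections s" and cl: "clean TYPE('a)" unfolding P4_def by auto
    have ab: "abel TYPE('a)" by (rule ip_abel[OF st ip])
    show P6 unfolding P6_def strongly_star_clean_def
    proof
      fix a :: 'a
      obtain e u where "idempotent e" "unit_ring u" "a = e + u" using cl unfolding clean_def by blast
      moreover have "e * u = u * e" using abelD[OF ab \<open>idempotent e\<close>] .
      ultimately show "\<exists>p u. projection s p \<and> unit_ring u \<and> a = p + u \<and> p * u = u * p"
        using ip unfolding idems_are_projections_def by blast
    qed
  qed
  moreover have "P3 \<Longrightarrow> P2"
  proof -
    assume h: P3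
    hence ip: "idems_are_projections s" and isr: "isr_one TYPE('a)" unfolding P3_def by auto
    have ab: "abel TYPE('a)" by (rule ip_abel[OF st ip])
    show P2 unfolding P2_def
    proof (intro allI impI)
      fix a b :: 'a assume "comaximal a b"
      then obtain e where "idempotent e" "unit_ring (a + b * e)" using isr unfolding isr_one_def by blast
      moreover have "e * a = a * e" using abelD[OF ab \<open>idempotent e\<close>] .
      ultimately show "\<exists>p. projection s p \<and> p * a = a * p \<and> unit_ring (a + b * p)"
        using ip unfolding idems_are_projections_def by blast
    qed
  qed
  moreover have "P2 \<Longrightarrow> P6"
  proof -
    assume h: P2
    show P6 unfolding P6_def strongly_star_clean_def
    proof
      fix a :: 'a
      obtain p where pr: "projection s p" and pa: "p * (a - 1) = (a - 1) * p" and un: "unit_ring (a - 1 + 1 * p)"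
        using h cm1[of a] unfolding P2_def by blast
      have pp: "p * p = p" using pr unfolding projection_def by simp
      have pa': "p * a = a * p" using pa by (simp add: algebra_simps)
      have "(1 - p) * (a - 1 + p) = (a - 1 + p) * (1 - p)" using pa' pp by (simp add: algebra_simps)
      moreover have "a = (1 - p) + (a - 1 + p)" by simp
      ultimately show "\<exists>p u. projection s p \<and> unit_ring u \<and> a = p + u \<and> p * u = u * p"
        using p1[OF pr] un by (metis mult_1_left)
    qed
  qed
  moreover have "P2 \<Longrightarrow> psr_one s" unfolding P2_def psr_one_def by blast
  moreover have "P6 \<Longrightarrow> idems_are_projections s" unfolding P6_def using ssc_ip[OF st] .
  moreover have "P1 \<Longrightarrow> P5"
  proof -
    assume h: P1
    hence psr: "psr_one s" and sa: "star_abelian s" unfolding P1_def by auto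
    have "star_clean s" unfolding star_clean_def
    proof
      fix a :: 'a
      obtain p where pr: "projection s p" and un: "unit_ring (a - 1 + 1 * p)"
        using psr cm1[of a] unfolding psr_one_def by blast
      moreover have "a = (1 - p) + (a - 1 + p)" by simp
      ultimately show "\<exists>p u. projection s p \<and> unit_ring u \<and> a = p + u"
        using p1[OF pr] by (metis mult_1_left)
    qed
    with sa show P5 unfolding P5_def by simp
  qed
  moreover have "P5 \<Longrightarrow> P6" unfolding P5_def P6_def star_clean_def strongly_star_clean_def star_abelian_def
    by metis
  moreover have "P6 \<Longrightarrow> star_clean s" unfolding P6_def star_clean_def strongly_star_clean_def by blast
  ultimately have "P1 = P6 \<and> P2 = P6 \<and> P3 = P6 \<and> P4 = P6 \<and> P4' = P6 \<and> P5 = P6 \<and> P7 = P6"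
    using ipsa unfolding P1_def P5_def by blast
  thus ?thesis unfolding P1_def P2_def P3_def P4_def P4'_def P5_def P6_def P7_def by simp
qed

end
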